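(* Let $d\ge2$, $\lambda>0$, $u>0$ and $\mathbf N\sim\mathrm{NDFHL}^{(d)}(\lambda,u)$. Then the differential entropy satisfies $|h(\mathbf N)|<\infty$.
   Context: For an integer $d\ge2$, $\lambda>0$, $u>0$, $\mathrm{NDFHL}^{(d)}(\lambda,u)$ is the probability law on $\mathbb R^{d-1}$ with density $$f(\mathbf n)=\frac{\lambda}{2^{\frac d2-1}\pi^{\frac d2}}\left(\frac{u}{\rho(\mathbf n)}\right)^{\frac d2}e^{\lambda u}K_{\frac d2}\bigl(u\rho(\mathbf n)\bigr),\quad \rho(\mathbf n)=\sqrt{\|\mathbf n\|^2+\lambda^2},$$ $K_\nu$ the modified Bessel function of the second kind. *)

theory Defs
  imports "HOL-Analysis.Analysis"
begin

definition besselK :: "real \<Rightarrow> real \<Rightarrow> real" where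
  "besselK \<nu> x = (LBINT t:{0..}. exp (- x * cosh t) * cosh (\<nu> * t))"

text \<open>Density of NDFHL^(d)(lambda,u) on R^(d-1); here the space R^(d-1) is the
type real^'n, so d = CARD('n) + 1 (hence d >= 2 automatically).\<close>
definition ndfhl_density :: "nat \<Rightarrow> real \<Rightarrow> real \<Rightarrow> real ^ 'n \<Rightarrow> real" where
  "ndfhl_density d lam u n =
     (let rho = sqrt ((norm n)\<^sup>2 + lam\<^sup>2) in
      lam / (2 powr (real d / 2 - 1) * pi powr (real d / 2))
      * (u / rho) powr (real d / 2) * exp (lam * u) * besselK (real d / 2) (u * rho))"

text \<open>Differential entropy h(N) = - int f ln f of a density f w.r.t. Lebesgue measure.
It is finite (|h(N)| < infinity) iff f ln f is Lebesgue integrable.\<close>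
definition diff_entropy_finite :: "('a::euclidean_space \<Rightarrow> real) \<Rightarrow> bool" where
  "diff_entropy_finite f \<longleftrightarrow> integrable lborel (\<lambda>x. f x * ln (f x))"

end

theory Submission
  imports Defs
begin

lemma exp_half_line_integrable:
  fixes a :: real assumes a: "a > 0"
  shows "integrable lborel (\<lambda>s. indicator {0..} s * exp (- a * s))"
proof -
  have "(\<lambda>s. exp (- a * s)) absolutely_integrable_on {0..}"
    by (rule nonnegative_absolutely_integrable_1[OF integrable_on_exp_minus_to_infinity[OF a]]) auto
  then have "integrable lebesgue (\<lambda>s. indicator {0..} s * exp (- a * s))"
    by (simp add: absolutely_integrable_on_def set_integrable_def)
  then show ?thesis
    by (subst (asm) integrable_completion) auto
qed

lemma exp_abs_integrable:
  fixes a :: real assumes a: "a > 0"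
  shows "integrable lborel (\<lambda>s. exp (- a * \<bar>s\<bar>))"
proof -
  let ?g = "\<lambda>s::real. indicator {0..} s * exp (- a * s)"
  have g1: "integrable lborel ?g" by (rule exp_half_line_integrable[OF a])
  have g2: "integrable lborel (\<lambda>s. ?g (0 + (-1) * s))"
    by (rule lborel_integrable_real_affine[OF g1]) simp
  have "integrable lborel (\<lambda>s. ?g s + ?g (0 + (-1) * s))" using g1 g2 by (rule Bochner_Integration.integrable_add)
  note B = Bochner_Integration.integrable_bound[OF this, of "\<lambda>s. exp (- a * \<bar>s\<bar>)"]
  show ?thesis
  proof (rule B)
    show "(\<lambda>s. exp (- a * \<bar>s\<bar>)) \<in> borel_measurable lborel" by measurable
    show "AE x in lborel. norm (exp (- a * \<bar>x\<bar>)) \<le> norm (?g x + ?g (0 + (-1) * x))"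
      by (intro AE_I2) (auto simp: indicator_def)
  qed
qed

lemma integrable_prod_basis:
  fixes h :: "real \<Rightarrow> real"
  assumes h: "integrable lborel h" and hn: "\<And>s. h s \<ge> 0"
  shows "integrable (lborel :: 'a::euclidean_space measure) (\<lambda>x. \<Prod>b\<in>Basis. h (x \<bullet> b))"
proof -
  have hm[measurable]: "h \<in> borel_measurable borel" using h by auto
  have "(\<integral>\<^sup>+x. ennreal (\<Prod>b\<in>(Basis::'a set). h (x \<bullet> b)) \<partial>lborel) = (\<integral>\<^sup>+x. (\<Prod>b\<in>(Basis::'a set). ennreal (h (x \<bullet> b))) \<partial>lborel)"
    by (simp add: prod_ennreal hn)
  also have "\<dots> = (\<Prod>b\<in>(Basis::'a set). (\<integral>\<^sup>+x. ennreal (h x) \<partial>lborel))"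
    by (rule nn_integral_lborel_prod) auto
  also have "\<dots> < \<infinity>"
  proof -
    have "(\<integral>\<^sup>+x. ennreal (h x) \<partial>lborel) < \<infinity>"
      using h hn by (simp add: integrable_iff_bounded)
    then show ?thesis by (simp add: power_less_top_ennreal)
  qed
  finally show ?thesis
    by (subst integrable_iff_bounded) (auto simp: hn prod_nonneg)
qed

lemma quad_bound:
  fixes a b t :: real assumes a: "a > 0"
  shows "- a * t^2 / 4 + b * t \<le> b^2 / a"
proof -
  have "0 \<le> (a*t/2 - b)^2" by simp
  then have "a * (- a * t^2 / 4 + b * t) \<le> b^2"
    by (simp add: power2_eq_square algebra_simps)
  then show ?thesis using a by (simp add: pos_le_divide_eq mult.commute)
qed

lemma bessel_integrand_bound:
  fixes a \<nu> t :: real assumes a: "a > 0" and t: "t \<ge> 0"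
  shows "exp (- a * cosh t) * cosh (\<nu> * t) \<le> exp ((\<bar>\<nu>\<bar>+1)^2 / a) * exp (- t)"
proof -
  have c1: "cosh (\<nu> * t) \<le> exp (\<bar>\<nu>\<bar> * t)"
  proof -
    have "cosh (\<nu> * t) = (exp (\<nu>*t) + exp (-(\<nu>*t))) / 2" by (simp add: cosh_def)
    moreover have "exp (\<nu>*t) \<le> exp (\<bar>\<nu>\<bar> * t)" "exp (-(\<nu>*t)) \<le> exp (\<bar>\<nu>\<bar> * t)"
      using mult_right_mono[OF abs_ge_self t, of \<nu>] mult_right_mono[OF abs_ge_minus_self t, of \<nu>]
      by auto
    moreover have gen: "\<And>c A B E::real. c = (A+B)/2 \<Longrightarrow> A \<le> E \<Longrightarrow> B \<le> E \<Longrightarrow> c \<le> E" by argo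
    ultimately show ?thesis by blast
  qed
  have c2: "cosh t \<ge> t^2 / 4"
  proof -
    have "1 + t + t^2/2 \<le> exp t" using exp_lower_Taylor_quadratic[OF t] by simp
    moreover have "cosh t \<ge> exp t / 2" by (simp add: cosh_def)
    ultimately have "t^2/2 \<le> exp t" using t by linarith
    then show ?thesis using \<open>cosh t \<ge> exp t / 2\<close> by linarith
  qed
  have "exp (- a * cosh t) * cosh (\<nu> * t) \<le> exp (- a * (t^2/4)) * exp (\<bar>\<nu>\<bar> * t)"
    by (intro mult_mono) (use c1 c2 a in auto)
  also have "\<dots> = exp (- a * t^2/4 + (\<bar>\<nu>\<bar>+1) * t) * exp (-t)"
    by (simp add: exp_add[symmetric] algebra_simps)
  also have "\<dots> \<le> exp ((\<bar>\<nu>\<bar>+1)^2 / a) * exp (- t)"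
    using quad_bound[OF a, of t "\<bar>\<nu>\<bar>+1"] by simp
  finally show ?thesis .
qed

lemma cosh_measurable[measurable]: "(cosh :: real \<Rightarrow> real) \<in> borel_measurable borel"
  by (intro borel_measurable_continuous_onI continuous_intros)

lemma bessel_integrable:
  fixes a \<nu> :: real assumes a: "a > 0"
  shows "integrable lborel (\<lambda>t. indicator {0..} t * (exp (- a * cosh t) * cosh (\<nu> * t)))"
proof -
  let ?C = "exp ((\<bar>\<nu>\<bar>+1)^2 / a)"
  have "integrable lborel (\<lambda>t. ?C * (indicator {0..} t * exp (- 1 * t)))"
    using exp_half_line_integrable[of 1] by simp
  note B = Bochner_Integration.integrable_bound[OF this,
      of "\<lambda>t. indicator {0..} t * (exp (- a * cosh t) * cosh (\<nu> * t))"]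
  show ?thesis
  proof (rule B)
    show "(\<lambda>t. indicator {0..} t * (exp (- a * cosh t) * cosh (\<nu> * t))) \<in> borel_measurable lborel"
      by measurable
    show "AE x in lborel. norm (indicator {0..} x * (exp (- a * cosh x) * cosh (\<nu> * x)))
           \<le> norm (?C * (indicator {0..} x * exp (- 1 * x)))"
      using bessel_integrand_bound[OF a] by (intro AE_I2) (auto simp: indicator_def)
  qed
qed

lemma besselK_eq: "besselK \<nu> z = (\<integral>t. indicator {0..} t * (exp (- z * cosh t) * cosh (\<nu> * t)) \<partial>lborel)"
  by (simp add: besselK_def set_lebesgue_integral_def)

lemma besselK_lower:
  fixes \<nu> z :: real assumes z: "z > 0"
  shows "exp (- z * cosh 1) \<le> besselK \<nu> z"
proof -
  have "(\<integral>t. indicator {0..1::real} t * exp (- z * cosh (1::real)) \<partial>lborel) = exp (- z * cosh 1)"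
    by (simp del: content_real_eq_0 add: content_real)
  then have "exp (- z * cosh 1) = (\<integral>t. indicator {0..1::real} t * exp (- z * cosh (1::real)) \<partial>lborel)"
    by (rule sym)
  also have "\<dots> \<le> (\<integral>t. indicator {0..} t * (exp (- z * cosh t) * cosh (\<nu> * t)) \<partial>lborel)"
  proof (rule integral_mono)
    show "integrable lborel (\<lambda>t. indicator {0..1::real} t * exp (- z * cosh (1::real)))"
      by (intro integrable_mult_left) auto
    show "integrable lborel (\<lambda>t. indicator {0..} t * (exp (- z * cosh t) * cosh (\<nu> * t)))"
      by (rule bessel_integrable[OF z])
    fix t :: real
    show "indicator {0..1} t * exp (- z * cosh 1) \<le> indicator {0..} t * (exp (- z * cosh t) * cosh (\<nu> * t))"
    proof (cases "t \<in> {0..1}")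
      case True
      have "cosh t \<le> cosh 1" using True by (auto simp: cosh_real_nonneg_le_iff)
      then have "exp (- z * cosh 1) \<le> exp (- z * cosh t)" using z by simp
      also have "\<dots> \<le> exp (- z * cosh t) * cosh (\<nu> * t)"
        using cosh_real_ge_1[of "\<nu> * t"] by (intro mult_le_cancel_left1[THEN iffD2]) auto
      finally show ?thesis using True by auto
    next
      case False
      then show ?thesis by (auto simp: indicator_def)
    qed
  qed
  finally show ?thesis by (simp add: besselK_eq)
qed

lemma besselK_upper:
  fixes \<nu> z z0 :: real assumes z0: "z0 > 0" and z: "z \<ge> z0"
  shows "besselK \<nu> z \<le> exp (- z / 2) * besselK \<nu> (z0 / 2)"
proof -
  have "besselK \<nu> z \<le> (\<integral>t. exp (- z / 2) * (indicator {0..} t * (exp (- (z0/2) * cosh t) * cosh (\<nu> * t))) \<partial>lborel)"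
    unfolding besselK_eq
  proof (rule integral_mono)
    show "integrable lborel (\<lambda>t. indicator {0..} t * (exp (- z * cosh t) * cosh (\<nu> * t)))"
      by (rule bessel_integrable) (use z0 z in auto)
    show "integrable lborel (\<lambda>t. exp (- z / 2) * (indicator {0..} t * (exp (- (z0/2) * cosh t) * cosh (\<nu> * t))))"
      by (intro integrable_mult_right bessel_integrable) (use z0 in auto)
    fix t :: real
    have ch: "cosh t \<ge> 1" by (rule cosh_real_ge_1)
    have "z * cosh t \<ge> z / 2 + (z0/2) * cosh t"
    proof -
      have "(z - z0/2) * cosh t \<ge> (z - z0/2) * 1"
        using ch z z0 by (intro mult_left_mono) auto
      then show ?thesis using z z0 by (simp add: algebra_simps)
    qed
    then have "exp (- z * cosh t) \<le> exp (- z / 2) * exp (- (z0/2) * cosh t)"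
      by (simp add: exp_add[symmetric])
    then have "exp (- z * cosh t) * cosh (\<nu> * t) \<le> exp (- z / 2) * exp (- (z0/2) * cosh t) * cosh (\<nu> * t)"
      by (intro mult_right_mono) auto
    then show "indicator {0..} t * (exp (- z * cosh t) * cosh (\<nu> * t))
        \<le> exp (- z / 2) * (indicator {0..} t * (exp (- (z0/2) * cosh t) * cosh (\<nu> * t)))"
      by (auto simp: indicator_def mult_ac)
  qed
  also have "\<dots> = exp (- z / 2) * besselK \<nu> (z0 / 2)"
    by (simp add: besselK_eq)
  finally show ?thesis .
qed

lemma besselK_measurable[measurable]: "besselK \<nu> \<in> borel_measurable borel"
  unfolding besselK_eq by measurable

lemma F_bound:
  fixes A \<nu> lam u :: real
  assumes A: "A > 0" and nu: "\<nu> \<ge> 0" and lam: "lam > 0" and u: "u > 0"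
  shows "\<exists>C. \<forall>r\<ge>lam. \<bar>(A * (u/r) powr \<nu> * exp (lam*u) * besselK \<nu> (u*r)) *
            ln (A * (u/r) powr \<nu> * exp (lam*u) * besselK \<nu> (u*r))\<bar> \<le> C * exp (- (u/4) * r)"
proof -
  define K0 where "K0 = besselK \<nu> (u*lam/2)"
  have ul: "0 < u*lam/2" using lam u by simp
  have K0: "K0 > 0" unfolding K0_def
    by (rule less_le_trans[OF exp_gt_zero besselK_lower[OF ul]])
  define M where "M = A * (u/lam) powr \<nu> * exp (lam*u) * K0"
  have M: "M > 0" unfolding M_def using A K0 lam u by simp
  define P where "P = \<bar>ln M\<bar> + \<bar>ln A\<bar> + \<nu> * \<bar>ln u\<bar>"
  define Q where "Q = \<nu> + u * cosh 1"
  have Q: "Q \<ge> 0" unfolding Q_def using nu u cosh_real_ge_1[of 1] by simp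
  have P: "P \<ge> 0" unfolding P_def using nu by simp
  show ?thesis
  proof (intro exI allI impI)
    fix r :: real assume r: "lam \<le> r"
    have r0: "r > 0" using r lam by simp
    define F where "F = A * (u/r) powr \<nu> * exp (lam*u) * besselK \<nu> (u*r)"
    have ul2: "0 < u*lam" using lam u by simp
    have ul3: "u*lam \<le> u*r" using r u by simp
    have Kup: "besselK \<nu> (u*r) \<le> exp (- (u*r)/2) * K0"
      unfolding K0_def by (rule besselK_upper[OF ul2 ul3])
    have Klow: "exp (- (u*r) * cosh 1) \<le> besselK \<nu> (u*r)"
      using besselK_lower[of "u*r" \<nu>] u r0 by simp
    have Kpos: "besselK \<nu> (u*r) > 0" by (rule less_le_trans[OF exp_gt_zero Klow])
    have pw: "(u/r) powr \<nu> \<le> (u/lam) powr \<nu>"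
      by (rule powr_mono2) (use nu u lam r in \<open>auto intro!: divide_left_mono\<close>)
    have pwpos: "(u/r) powr \<nu> > 0" using u r0 by simp
    have Fup: "F \<le> M * exp (- (u*r)/2)"
    proof -
      have "F \<le> A * (u/lam) powr \<nu> * exp (lam*u) * (exp (- (u*r)/2) * K0)"
        unfolding F_def using A pw Kup Kpos pwpos
        by (intro mult_mono) auto
      then show ?thesis by (simp add: M_def mult_ac)
    qed
    define L where "L = A * (u/r) powr \<nu> * exp (lam*u) * exp (- (u*r) * cosh 1)"
    have Lpos: "L > 0" unfolding L_def using A pwpos by simp
    have Flow: "L \<le> F" unfolding L_def F_def using A pwpos Klow by (intro mult_left_mono) auto
    have Fpos: "F > 0" using Lpos Flow by simp
    have lnup: "ln F \<le> ln M"
    proof -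
      have "ln F \<le> ln (M * exp (- (u*r)/2))" using Fup Fpos by simp
      also have "\<dots> = ln M - (u*r)/2" using M by (simp add: ln_mult)
      also have "\<dots> \<le> ln M" using u r0 by simp
      finally show ?thesis .
    qed
    have lnL: "ln L = ln A + \<nu> * ln u - \<nu> * ln r + lam*u - u*r*cosh 1"
    proof -
      have "ln L = ln A + ln ((u/r) powr \<nu>) + lam*u + (- (u*r) * cosh 1)"
        unfolding L_def using A pwpos by (simp add: ln_mult)
      also have "ln ((u/r) powr \<nu>) = \<nu> * (ln u - ln r)"
        using u r0 by (simp add: ln_powr ln_div)
      finally show ?thesis by (simp add: algebra_simps)
    qed
    have lnr: "ln r \<le> r" using ln_le_minus_one[OF r0] by simp
    have h: "\<nu> * ln r \<le> \<nu> * r" using lnr nu by (rule mult_left_mono)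
    have "- \<bar>ln u\<bar> \<le> ln u" by simp
    then have "\<nu> * (- \<bar>ln u\<bar>) \<le> \<nu> * ln u" using nu by (rule mult_left_mono)
    then have h2: "\<nu> * ln u \<ge> - (\<nu> * \<bar>ln u\<bar>)" by simp
    have h3: "lam * u \<ge> 0" using lam u by simp
    have h4: "ln L \<le> ln F" using Lpos Flow by simp
    have h5: "Q * r = \<nu> * r + u*r*cosh 1" unfolding Q_def by (simp add: algebra_simps)
    have h6: "ln A \<ge> - \<bar>ln A\<bar>" by simp
    have lnlow: "ln F \<ge> - (\<bar>ln A\<bar> + \<nu> * \<bar>ln u\<bar>) - Q * r"
      using lnL h h2 h3 h4 h5 h6 by linarith
    have h7: "Q * r \<ge> 0" using Q r0 by simp
    have h8: "ln M \<le> \<bar>ln M\<bar>" by simp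
    have absln: "\<bar>ln F\<bar> \<le> P + Q * r"
    proof -
      have h9: "\<nu> * \<bar>ln u\<bar> \<ge> 0" using nu by simp
      have h10: "\<bar>ln M\<bar> \<ge> 0" "\<bar>ln A\<bar> \<ge> 0" by simp_all
      show ?thesis unfolding P_def abs_le_iff
        using lnup lnlow h7 h8 h9 h10 by (intro conjI) linarith+
    qed
    have "\<bar>F * ln F\<bar> = F * \<bar>ln F\<bar>" using Fpos by (simp add: abs_mult)
    also have "\<dots> \<le> (M * exp (- (u*r)/2)) * (P + Q * r)"
      using Fup absln Fpos by (intro mult_mono) auto
    also have "\<dots> \<le> M * (P + 4 * Q / u) * exp (- (u/4) * r)"
    proof -
      have e1: "exp (- (u*r)/2) \<le> exp (- (u/4) * r)" using u r0 by simp
      have "u*r/4 \<le> exp (u*r/4)" using exp_ge_add_one_self[of "u*r/4"] by linarith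
      then have "u*r \<le> exp (u*r/4) * 4" by linarith
      then have "r \<le> (4/u) * exp (u*r/4)" using u by (simp add: field_simps)
      then have "r * exp (- (u*r)/2) \<le> (4/u) * exp (u*r/4) * exp (- (u*r)/2)"
        by (intro mult_right_mono) auto
      also have "\<dots> = (4/u) * exp (- (u/4) * r)"
        by (simp add: mult.assoc exp_add[symmetric])
      finally have e2: "r * exp (- (u*r)/2) \<le> (4/u) * exp (- (u/4) * r)" .
      have "(M * exp (- (u*r)/2)) * (P + Q * r) = M * (P * exp (- (u*r)/2) + Q * (r * exp (- (u*r)/2)))"
        by (simp add: algebra_simps)
      also have "\<dots> \<le> M * (P * exp (- (u/4) * r) + Q * ((4/u) * exp (- (u/4) * r)))"
        using e1 e2 P Q M by (intro mult_left_mono add_mono) auto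
      also have "\<dots> = M * (P + 4 * Q / u) * exp (- (u/4) * r)"
        by (simp add: algebra_simps)
      finally show ?thesis .
    qed
    finally show "\<bar>(A * (u/r) powr \<nu> * exp (lam*u) * besselK \<nu> (u*r)) *
            ln (A * (u/r) powr \<nu> * exp (lam*u) * besselK \<nu> (u*r))\<bar> \<le> M * (P + 4 * Q / u) * exp (- (u/4) * r)"
      unfolding F_def .
  qed
qed

theorem lemma9:
  fixes lam u :: real
  assumes "lam > 0" and "u > 0"
  shows "diff_entropy_finite
           (ndfhl_density (CARD('n) + 1) lam u :: real ^ 'n \<Rightarrow> real)"
proof -
  note lam = assms(1) and u = assms(2)
  define \<nu> where "\<nu> = real (CARD('n) + 1) / 2"
  define A where "A = lam / (2 powr (\<nu> - 1) * pi powr \<nu>)"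
  define f where "f = (ndfhl_density (CARD('n) + 1) lam u :: real ^ 'n \<Rightarrow> real)"
  define \<rho> where "\<rho> = (\<lambda>x::real^'n. sqrt ((norm x)\<^sup>2 + lam\<^sup>2))"
  have A: "A > 0" unfolding A_def using lam by simp
  have nu: "\<nu> \<ge> 0" unfolding \<nu>_def by simp
  have fx: "\<And>x. f x = A * (u/\<rho> x) powr \<nu> * exp (lam*u) * besselK \<nu> (u*\<rho> x)"
    by (simp add: f_def ndfhl_density_def Let_def A_def \<nu>_def \<rho>_def)
  obtain C where C: "\<And>r. r \<ge> lam \<Longrightarrow> \<bar>(A * (u/r) powr \<nu> * exp (lam*u) * besselK \<nu> (u*r)) *
            ln (A * (u/r) powr \<nu> * exp (lam*u) * besselK \<nu> (u*r))\<bar> \<le> C * exp (- (u/4) * r)"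
    using F_bound[OF A nu lam u] by blast
  have C0: "C \<ge> 0"
  proof -
    have "0 \<le> C * exp (- (u/4) * lam)" using C[of lam] by (smt (verit) abs_ge_zero)
    then show ?thesis by (simp add: zero_le_mult_iff)
  qed
  define k where "k = CARD('n)"
  have k: "k > 0" unfolding k_def by simp
  define c where "c = u / (4 * real k)"
  have c: "c > 0" unfolding c_def using u k by simp
  define g where "g = (\<lambda>x::real^'n. C * (\<Prod>b\<in>Basis. exp (- c * \<bar>x \<bullet> b\<bar>)))"
  have gint: "integrable lborel g"
    unfolding g_def
    by (intro integrable_mult_right integrable_prod_basis exp_abs_integrable c) simp
  have bound: "\<bar>f x * ln (f x)\<bar> \<le> g x" for x
  proof -
    have r1: "\<rho> x \<ge> lam" unfolding \<rho>_def using lam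
      by (intro real_le_rsqrt) simp
    have r2: "\<rho> x \<ge> norm x" unfolding \<rho>_def
      by (intro real_le_rsqrt) simp
    have "\<bar>f x * ln (f x)\<bar> \<le> C * exp (- (u/4) * \<rho> x)"
      unfolding fx using C[OF r1] .
    also have "\<dots> \<le> C * exp (- (u/4) * norm x)"
      using C0 u r2 by (intro mult_left_mono) auto
    also have "\<dots> \<le> C * (\<Prod>b\<in>Basis. exp (- c * \<bar>x \<bullet> b\<bar>))"
    proof (intro mult_left_mono C0)
      have "(\<Sum>b\<in>(Basis::(real^'n) set). \<bar>x \<bullet> b\<bar>) \<le> of_nat (card (Basis::(real^'n) set)) * norm x"
        by (rule sum_bounded_above) (rule Basis_le_norm)
      then have s: "(\<Sum>b\<in>(Basis::(real^'n) set). \<bar>x \<bullet> b\<bar>) \<le> real k * norm x"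
        by (simp add: k_def)
      have "(\<Sum>b\<in>(Basis::(real^'n) set). - c * \<bar>x \<bullet> b\<bar>) = - c * (\<Sum>b\<in>(Basis::(real^'n) set). \<bar>x \<bullet> b\<bar>)"
        by (simp add: sum_distrib_left)
      also have "\<dots> \<ge> - c * (real k * norm x)"
        using s c by simp
      finally have "- (u/4) * norm x \<le> (\<Sum>b\<in>(Basis::(real^'n) set). - c * \<bar>x \<bullet> b\<bar>)"
        unfolding c_def using k by simp
      then have "exp (- (u/4) * norm x) \<le> exp (\<Sum>b\<in>(Basis::(real^'n) set). - c * \<bar>x \<bullet> b\<bar>)"
        by simp
      also have "\<dots> = (\<Prod>b\<in>Basis. exp (- c * \<bar>x \<bullet> b\<bar>))"
        by (simp add: exp_sum)
      finally show "exp (- (u/4) * norm x) \<le> (\<Prod>b\<in>Basis. exp (- c * \<bar>x \<bullet> b\<bar>))" .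
    qed
    finally show ?thesis unfolding g_def .
  qed
  have meas: "(\<lambda>x. f x * ln (f x)) \<in> borel_measurable lborel"
    unfolding f_def ndfhl_density_def Let_def by measurable
  have "integrable lborel (\<lambda>x. f x * ln (f x))"
  proof (rule Bochner_Integration.integrable_bound[OF gint meas])
    show "AE x in lborel. norm (f x * ln (f x)) \<le> norm (g x)"
      using bound by (intro AE_I2) (smt (verit) real_norm_def abs_ge_zero)
  qed
  then show ?thesis unfolding diff_entropy_finite_def f_def .
qed

end
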